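(* Let $n \geq 1$ be an integer. Let $\mathcal{G} = (\mathcal{V}, \mathcal{E})$ be a cycle graph with $|\mathcal{V}| = 2n$ nodes, and let $\mathcal{G}' = (\mathcal{V}', \mathcal{E}')$ be a path graph with $|\mathcal{V}'| = 2n+1$ nodes. Let $P_k$ and $P'_k$ denote the $k$-hop random walk matrices of $\mathcal{G}$ and $\mathcal{G}'$ respectively. Then for every pair of nodes $(i,j) \in \mathcal{V} \times \mathcal{V}$ there exists a pair of nodes $(i',j') \in \mathcal{V}' \times \mathcal{V}'$ such that $(P_k)_{ij} = (P'_k)_{i'j'}$ for all integers $k \geq 1$.
   Context: Graphs are finite and undirected. For a graph with adjacency matrix $A$ (with $A_{ij}=1$ if $i,j$ are adjacent and $0$ otherwise) and diagonal degree matrix $D$ (with $D_{ii} = \sum_j A_{ij}$), the $k$-hop random walk matrix is $P_k = (D^{-1}A)^k$; its $(i,j)$ entry is the probability that a simple random walk of length $k$ started at $i$ ends at $j$. A cycle graph is a graph consisting of a single cycle (all nodes distinct except that the walk returns to its start); a path graph is a graph consisting of a single simple path through all its nodes. *)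

theory Defs
  imports Complex_Main
begin

definition adj :: "('a \<Rightarrow> 'a \<Rightarrow> bool) \<Rightarrow> 'a \<Rightarrow> 'a \<Rightarrow> real" where
  "adj E i j = (if E i j then 1 else 0)"

definition degree :: "'a set \<Rightarrow> ('a \<Rightarrow> 'a \<Rightarrow> bool) \<Rightarrow> 'a \<Rightarrow> real" where
  "degree V E i = (\<Sum>j\<in>V. adj E i j)"

definition rw_step :: "'a set \<Rightarrow> ('a \<Rightarrow> 'a \<Rightarrow> bool) \<Rightarrow> 'a \<Rightarrow> 'a \<Rightarrow> real" where
  "rw_step V E i j = inverse (degree V E i) * adj E i j"

fun rw_matrix :: "'a set \<Rightarrow> ('a \<Rightarrow> 'a \<Rightarrow> bool) \<Rightarrow> nat \<Rightarrow> 'a \<Rightarrow> 'a \<Rightarrow> real" where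
  "rw_matrix V E 0 i j = (if i = j then 1 else 0)"
| "rw_matrix V E (Suc k) i j = (\<Sum>l\<in>V. rw_step V E i l * rw_matrix V E k l j)"

definition cycle_graph :: "'a set \<Rightarrow> ('a \<Rightarrow> 'a \<Rightarrow> bool) \<Rightarrow> nat \<Rightarrow> bool" where
  "cycle_graph V E m \<longleftrightarrow> (\<exists>f. bij_betw f {..<m} V \<and>
     (\<forall>x y. E x y \<longleftrightarrow> (\<exists>i<m. \<exists>j<m. x = f i \<and> y = f j \<and>
        (j = (i + 1) mod m \<or> i = (j + 1) mod m))))"

definition path_graph :: "'a set \<Rightarrow> ('a \<Rightarrow> 'a \<Rightarrow> bool) \<Rightarrow> nat \<Rightarrow> bool" where
  "path_graph V E m \<longleftrightarrow> (\<exists>f. bij_betw f {..<m} V \<and>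
     (\<forall>x y. E x y \<longleftrightarrow> (\<exists>i<m. \<exists>j<m. x = f i \<and> y = f j \<and>
        (j = i + 1 \<or> i = j + 1))))"

end

theory Submission
  imports Defs
begin

lemma degree_transfer:
  assumes "bij_betw f A V" "\<And>a b. a\<in>A \<Longrightarrow> b\<in>A \<Longrightarrow> E (f a) (f b) = R a b" "a \<in> A"
  shows "degree V E (f a) = degree A R a"
proof -
  have "degree V E (f a) = (\<Sum>c\<in>A. adj E (f a) (f c))"
    unfolding degree_def using sum.reindex_bij_betw[OF assms(1), of "adj E (f a)"] by simp
  also have "\<dots> = degree A R a" unfolding degree_def adj_def using assms by (intro sum.cong) auto
  finally show ?thesis .
qed

lemma rw_transfer:
  assumes "bij_betw f A V" "\<And>a b. a\<in>A \<Longrightarrow> b\<in>A \<Longrightarrow> E (f a) (f b) = R a b"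
  shows "a\<in>A \<Longrightarrow> b\<in>A \<Longrightarrow> rw_matrix V E k (f a) (f b) = rw_matrix A R k a b"
proof (induction k arbitrary: a b)
  case 0
  have "inj_on f A" using assms(1) by (simp add: bij_betw_def)
  then show ?case using 0 by (simp add: inj_on_eq_iff)
next
  case (Suc k)
  have "rw_matrix V E (Suc k) (f a) (f b) = (\<Sum>c\<in>A. rw_step V E (f a) (f c) * rw_matrix V E k (f c) (f b))"
    using sum.reindex_bij_betw[OF assms(1), of "\<lambda>l. rw_step V E (f a) l * rw_matrix V E k l (f b)"] by simp
  also have "\<dots> = (\<Sum>c\<in>A. rw_step A R a c * rw_matrix A R k c b)"
  proof (intro sum.cong refl)
    fix c assume c: "c \<in> A"
    show "rw_step V E (f a) (f c) * rw_matrix V E k (f c) (f b) = rw_step A R a c * rw_matrix A R k c b"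
      unfolding rw_step_def using degree_transfer[where E=E and R=R, OF assms Suc.prems(1)] Suc.IH[OF c Suc.prems(2)]
        assms(2)[OF Suc.prems(1) c] by (simp add: adj_def)
  qed
  finally show ?case by simp
qed

definition csuc :: "nat \<Rightarrow> nat \<Rightarrow> nat" where "csuc m a = (if a + 1 = m then 0 else a + 1)"
definition cpred :: "nat \<Rightarrow> nat \<Rightarrow> nat" where "cpred m a = (if a = 0 then m - 1 else a - 1)"

definition Rc :: "nat \<Rightarrow> nat \<Rightarrow> nat \<Rightarrow> bool" where
  "Rc m a b = (b = (a + 1) mod m \<or> a = (b + 1) mod m)"
definition Rp :: "nat \<Rightarrow> nat \<Rightarrow> bool" where
  "Rp a b = (b = a + 1 \<or> a = b + 1)"

lemma sum_two_filter:
  fixes F :: "nat \<Rightarrow> real"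
  assumes "finite A" "{l\<in>A. P l} = S"
  shows "(\<Sum>l\<in>A. (if P l then 1 else 0) * F l) = sum F S"
proof -
  have "(\<Sum>l\<in>A. (if P l then 1 else 0) * F l) = (\<Sum>l\<in>A. if P l then F l else 0)"
    by (intro sum.cong) auto
  also have "\<dots> = sum F {l\<in>A. P l}" using assms(1) by (simp add: sum.inter_filter)
  finally show ?thesis using assms(2) by simp
qed

lemma cycle_step:
  fixes F :: "nat \<Rightarrow> real"
  assumes "m \<ge> 2" "a < m"
  shows "(\<Sum>l\<in>{..<m}. rw_step {..<m} (Rc m) a l * F l) = (F (csuc m a) + F (cpred m a)) / 2"
proof -
  have eq: "Rc m a l = (l = csuc m a \<or> l = cpred m a)" if "l < m" for l
  proof -
    have "(a + 1) mod m = csuc m a" using assms by (auto simp: csuc_def)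
    moreover have "(l + 1) mod m = csuc m l" using that by (auto simp: csuc_def)
    ultimately show ?thesis using that assms by (auto simp: Rc_def csuc_def cpred_def)
  qed
  have fl: "{l\<in>{..<m}. Rc m a l} = {csuc m a, cpred m a}"
    using eq assms by (auto simp: csuc_def cpred_def)
  have deg: "degree {..<m} (Rc m) a = card {csuc m a, cpred m a}"
    unfolding degree_def adj_def using sum_two_filter[OF _ fl, of "\<lambda>_. 1"] by simp
  show ?thesis
  proof (cases "m = 2")
    case True
    have "csuc m a = cpred m a" using True assms by (auto simp: csuc_def cpred_def)
    then show ?thesis using sum_two_filter[OF _ fl, of "\<lambda>l. inverse (degree {..<m} (Rc m) a) * F l"] deg
      unfolding rw_step_def adj_def by (simp add: mult.assoc mult.left_commute)
  next
    case False
    have "csuc m a \<noteq> cpred m a" using False assms by (auto simp: csuc_def cpred_def)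
    then show ?thesis using sum_two_filter[OF _ fl, of "\<lambda>l. inverse (degree {..<m} (Rc m) a) * F l"] deg
      unfolding rw_step_def adj_def by (simp add: mult.left_commute sum_distrib_left[symmetric] field_simps)
  qed
qed

definition nb1 :: "nat \<Rightarrow> nat \<Rightarrow> nat" where "nb1 M y = (if y + 1 = M then y - 1 else y + 1)"
definition nb2 :: "nat \<Rightarrow> nat \<Rightarrow> nat" where "nb2 M y = (if y = 0 then 1 else y - 1)"

lemma path_step:
  fixes F :: "nat \<Rightarrow> real"
  assumes "M \<ge> 3" "y < M"
  shows "(\<Sum>l\<in>{..<M}. rw_step {..<M} Rp y l * F l) = (F (nb1 M y) + F (nb2 M y)) / 2"
proof (cases "y = 0 \<or> y + 1 = M")
  case True
  have fl: "{l\<in>{..<M}. Rp y l} = {nb1 M y}"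
    using True assms by (auto simp: Rp_def nb1_def)
  have deg: "degree {..<M} Rp y = 1"
    unfolding degree_def adj_def using sum_two_filter[OF _ fl, of "\<lambda>_. 1"] by simp
  have "nb1 M y = nb2 M y" using True assms by (auto simp: nb1_def nb2_def)
  then show ?thesis using sum_two_filter[OF _ fl, of "\<lambda>l. inverse (degree {..<M} Rp y) * F l"] deg
      unfolding rw_step_def adj_def by (simp add: mult.assoc mult.left_commute)
next
  case False
  have fl: "{l\<in>{..<M}. Rp y l} = {nb1 M y, nb2 M y}"
    using False assms by (auto simp: Rp_def nb1_def nb2_def)
  have ne: "nb1 M y \<noteq> nb2 M y" using False assms by (auto simp: nb1_def nb2_def)
  have deg: "degree {..<M} Rp y = 2"
    unfolding degree_def adj_def using sum_two_filter[OF _ fl, of "\<lambda>_. 1"] ne by simp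
  show ?thesis using sum_two_filter[OF _ fl, of "\<lambda>l. inverse (degree {..<M} Rp y) * F l"] deg ne
      unfolding rw_step_def adj_def by (simp add: mult.left_commute sum_distrib_left[symmetric] field_simps)
qed


lemma path_sym:
  assumes "a < M" "b < M"
  shows "rw_matrix {..<M} Rp k (M - 1 - a) (M - 1 - b) = rw_matrix {..<M} Rp k a b"
proof -
  have bij: "bij_betw (\<lambda>z. M - 1 - z) {..<M} {..<M}"
    by (rule bij_betw_byWitness[where f'="\<lambda>z. M - 1 - z"]) auto
  show ?thesis
    by (rule rw_transfer[OF bij _ _ _, where E=Rp and R=Rp]) (use assms in \<open>auto simp: Rp_def\<close>)
qed

definition off :: "nat \<Rightarrow> nat \<Rightarrow> nat \<Rightarrow> nat" where
  "off m a b = (if b \<le> a then a - b else a + m - b)"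
definition yy :: "nat \<Rightarrow> nat \<Rightarrow> nat" where
  "yy n r = (if r \<le> n then n + r else r - n)"
definition can :: "nat \<Rightarrow> nat \<Rightarrow> nat" where
  "can n z = (if z \<ge> n then z else 2 * n - z)"


lemma off_suc: assumes "a < m" "b < m" shows "off m (csuc m a) b = csuc m (off m a b)"
  using assms unfolding off_def csuc_def by auto
lemma off_pred: assumes "a < m" "b < m" shows "off m (cpred m a) b = cpred m (off m a b)"
  using assms unfolding off_def cpred_def by auto
lemma off_lt: assumes "a < m" "b < m" shows "off m a b < m"
  using assms unfolding off_def by auto

lemma arith_key:
  assumes "n \<ge> 1" "r < 2 * n"
  shows "(can n (yy n (csuc (2*n) r)) = can n (nb1 (2*n+1) (yy n r)) \<and>
          can n (yy n (cpred (2*n) r)) = can n (nb2 (2*n+1) (yy n r))) \<or>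
         (can n (yy n (csuc (2*n) r)) = can n (nb2 (2*n+1) (yy n r)) \<and>
          can n (yy n (cpred (2*n) r)) = can n (nb1 (2*n+1) (yy n r)))"
proof -
  consider "r = 0" | "0 < r \<and> r < n" | "r = n" | "n < r \<and> r + 1 < 2 * n" | "n < r \<and> r + 1 = 2 * n"
    using assms by linarith
  then show ?thesis
  proof cases
    case 1 then show ?thesis using assms unfolding can_def yy_def csuc_def cpred_def nb1_def nb2_def
      by (cases "n = 1") auto
  next
    case 2 then show ?thesis using assms unfolding can_def yy_def csuc_def cpred_def nb1_def nb2_def
      by auto
  next
    case 3 then show ?thesis using assms unfolding can_def yy_def csuc_def cpred_def nb1_def nb2_def
      by (cases "n = 1") auto
  next
    case 4 then show ?thesis using assms unfolding can_def yy_def csuc_def cpred_def nb1_def nb2_def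
      by (cases "r = n + 1") auto
  next
    case 5 then show ?thesis using assms unfolding can_def yy_def csuc_def cpred_def nb1_def nb2_def
      by (cases "r = n + 1") auto
  qed
qed


lemma can_eq:
  assumes "z \<le> 2 * n"
  shows "rw_matrix {..<2*n+1} Rp k z n = rw_matrix {..<2*n+1} Rp k (can n z) n"
proof (cases "z \<ge> n")
  case True then show ?thesis by (simp add: can_def)
next
  case False
  have "rw_matrix {..<2*n+1} Rp k (2*n+1 - 1 - z) (2*n+1 - 1 - n) = rw_matrix {..<2*n+1} Rp k z n"
    by (rule path_sym) (use assms in auto)
  moreover have "2*n+1 - 1 - n = n" by simp
  ultimately show ?thesis using False by (simp add: can_def)
qed

lemma main_ind:
  assumes "n \<ge> 1"
  shows "a < 2*n \<Longrightarrow> b < 2*n \<Longrightarrow>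
    rw_matrix {..<2*n} (Rc (2*n)) k a b = rw_matrix {..<2*n+1} Rp k (yy n (off (2*n) a b)) n"
proof (induction k arbitrary: a b)
  case 0
  then show ?case by (auto simp: yy_def off_def)
next
  case (Suc k)
  let ?P = "\<lambda>z. rw_matrix {..<2*n+1} Rp k z n"
  let ?r = "off (2*n) a b"
  have r: "?r < 2*n" using off_lt Suc.prems .
  have cs: "csuc (2*n) a < 2*n" "cpred (2*n) a < 2*n" using Suc.prems assms
    by (auto simp: csuc_def cpred_def)
  have "rw_matrix {..<2*n} (Rc (2*n)) (Suc k) a b =
     (rw_matrix {..<2*n} (Rc (2*n)) k (csuc (2*n) a) b + rw_matrix {..<2*n} (Rc (2*n)) k (cpred (2*n) a) b) / 2"
    using cycle_step[of "2*n" a] assms Suc.prems by simp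
  also have "\<dots> = (?P (yy n (csuc (2*n) ?r)) + ?P (yy n (cpred (2*n) ?r))) / 2"
    using Suc.IH[OF cs(1) Suc.prems(2)] Suc.IH[OF cs(2) Suc.prems(2)] off_suc off_pred Suc.prems by simp
  also have "\<dots> = (?P (can n (yy n (csuc (2*n) ?r))) + ?P (can n (yy n (cpred (2*n) ?r)))) / 2"
  proof -
    have e1: "?P (yy n (csuc (2*n) ?r)) = ?P (can n (yy n (csuc (2*n) ?r)))"
      by (rule can_eq) (use r in \<open>auto simp: yy_def csuc_def\<close>)
    have e2: "?P (yy n (cpred (2*n) ?r)) = ?P (can n (yy n (cpred (2*n) ?r)))"
      by (rule can_eq) (use r in \<open>auto simp: yy_def cpred_def\<close>)
    show ?thesis by (simp only: e1 e2)
  qed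
  also have "\<dots> = (?P (can n (nb1 (2*n+1) (yy n ?r))) + ?P (can n (nb2 (2*n+1) (yy n ?r)))) / 2"
    using arith_key[OF assms r] by auto
  also have "\<dots> = (?P (nb1 (2*n+1) (yy n ?r)) + ?P (nb2 (2*n+1) (yy n ?r))) / 2"
  proof -
    have e1: "?P (nb1 (2*n+1) (yy n ?r)) = ?P (can n (nb1 (2*n+1) (yy n ?r)))"
      by (rule can_eq) (use r in \<open>auto simp: yy_def nb1_def\<close>)
    have e2: "?P (nb2 (2*n+1) (yy n ?r)) = ?P (can n (nb2 (2*n+1) (yy n ?r)))"
      by (rule can_eq) (use r assms in \<open>auto simp: yy_def nb2_def\<close>)
    show ?thesis by (simp only: e1 e2)
  qed
  also have "\<dots> = rw_matrix {..<2*n+1} Rp (Suc k) (yy n ?r) n"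
  proof -
    have yl: "yy n ?r < 2*n+1" using r by (auto simp: yy_def)
    have m3: "2*n+1 \<ge> 3" using assms by simp
    show ?thesis using path_step[OF m3 yl, of ?P] by simp
  qed
  finally show ?case .
qed

theorem proposition1:
  fixes n :: nat and V :: "'a set" and E :: "'a \<Rightarrow> 'a \<Rightarrow> bool"
    and V' :: "'b set" and E' :: "'b \<Rightarrow> 'b \<Rightarrow> bool"
  assumes "n \<ge> 1"
    and "cycle_graph V E (2 * n)"
    and "path_graph V' E' (2 * n + 1)"
  shows "\<forall>i\<in>V. \<forall>j\<in>V. \<exists>i'\<in>V'. \<exists>j'\<in>V'.
           \<forall>k::nat. k \<ge> 1 \<longrightarrow> rw_matrix V E k i j = rw_matrix V' E' k i' j'"
proof (intro ballI)
  fix i j assume ij: "i \<in> V" "j \<in> V"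
  obtain f where f: "bij_betw f {..<2*n} V" and fE: "\<forall>x y. E x y \<longleftrightarrow> (\<exists>i<2*n. \<exists>j<2*n. x = f i \<and> y = f j \<and>
        (j = (i + 1) mod (2*n) \<or> i = (j + 1) mod (2*n)))"
    using assms(2) unfolding cycle_graph_def by blast
  obtain g where g: "bij_betw g {..<2*n+1} V'" and gE: "\<forall>x y. E' x y \<longleftrightarrow> (\<exists>i<2*n+1. \<exists>j<2*n+1. x = g i \<and> y = g j \<and>
        (j = i + 1 \<or> i = j + 1))"
    using assms(3) unfolding path_graph_def by blast
  have finj: "inj_on f {..<2*n}" and ginj: "inj_on g {..<2*n+1}" using f g by (auto simp: bij_betw_def)
  have fR: "E (f a) (f b) = Rc (2*n) a b" if "a \<in> {..<2*n}" "b \<in> {..<2*n}" for a b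
  proof -
    have md: "\<And>i. Suc i mod (2*n) < 2*n" using assms(1) by simp
    have "\<And>x y. x < 2*n \<Longrightarrow> y < 2*n \<Longrightarrow> f x = f y \<Longrightarrow> x = y" using finj unfolding inj_on_def by auto
    note inj = this
    show ?thesis
    proof
      assume "E (f a) (f b)"
      then obtain i j where ij: "i<2*n" "j<2*n" "f a = f i" "f b = f j"
        "(j = (i + 1) mod (2*n) \<or> i = (j + 1) mod (2*n))" using fE by blast
      then have "i = a" "j = b" using inj that by (metis lessThan_iff)+
      then show "Rc (2*n) a b" using ij by (simp add: Rc_def)
    next
      assume "Rc (2*n) a b" then show "E (f a) (f b)" using fE that unfolding Rc_def by auto
    qed
  qed
  have gR: "E' (g a) (g b) = Rp a b" if "a \<in> {..<2*n+1}" "b \<in> {..<2*n+1}" for a b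
  proof -
    have inj: "\<And>x y. x < 2*n+1 \<Longrightarrow> y < 2*n+1 \<Longrightarrow> g x = g y \<Longrightarrow> x = y" using ginj unfolding inj_on_def by auto
    show ?thesis
    proof
      assume "E' (g a) (g b)"
      then obtain i j where ij: "i<2*n+1" "j<2*n+1" "g a = g i" "g b = g j"
        "(j = i + 1 \<or> i = j + 1)" using gE by blast
      then have "i = a" "j = b" using inj that by (metis lessThan_iff)+
      then show "Rp a b" using ij by (simp add: Rp_def)
    next
      assume "Rp a b" then show "E' (g a) (g b)" using gE that unfolding Rp_def by auto
    qed
  qed
  obtain a where a: "a < 2*n" "i = f a" using ij(1) f by (metis bij_betw_imp_surj_on imageE lessThan_iff)
  obtain b where b: "b < 2*n" "j = f b" using ij(2) f by (metis bij_betw_imp_surj_on imageE lessThan_iff)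
  have ylt: "yy n (off (2*n) a b) < 2*n+1" using off_lt[OF a(1) b(1)] by (auto simp: yy_def)
  show "\<exists>i'\<in>V'. \<exists>j'\<in>V'. \<forall>k::nat. k \<ge> 1 \<longrightarrow> rw_matrix V E k i j = rw_matrix V' E' k i' j'"
  proof (intro bexI allI impI)
    fix k :: nat
    have "rw_matrix V E k i j = rw_matrix {..<2*n} (Rc (2*n)) k a b"
      using rw_transfer[OF f, of E "Rc (2*n)"] fR a b by simp
    also have "\<dots> = rw_matrix {..<2*n+1} Rp k (yy n (off (2*n) a b)) n"
      using main_ind[OF assms(1) a(1) b(1)] .
    also have "\<dots> = rw_matrix V' E' k (g (yy n (off (2*n) a b))) (g n)"
      using rw_transfer[OF g, of E' Rp] gR ylt by simp
    finally show "rw_matrix V E k i j = rw_matrix V' E' k (g (yy n (off (2*n) a b))) (g n)" .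
  next
    show "g (yy n (off (2*n) a b)) \<in> V'" using g ylt bij_betw_apply by fastforce
  next
    show "g n \<in> V'" using g bij_betw_apply by fastforce
  qed
qed

end
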